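(* Let $\rho_n\rightarrow_C\rho_{n-1}\rightarrow_C\cdots\rightarrow_C\rho_1$ ($n\ge1$) be a trace of tidy formulas. Then there is a unique $\rho\in\{\rho_1,\dots,\rho_n\}$ such that $\rho\trianglelefteq_f\rho_i$ for all $i\in\{1,\dots,n\}$ (so that the given trace witnesses $\rho_n\twoheadrightarrow_C^{\rho}\rho_1$). Moreover, if $\rho_1$ is a fixpoint formula then so is $\rho$.
   Context: Syntax. Formulas of the modal $\mu$-calculus are taken in negation normal form: $\phi ::= \top \mid \bot \mid p \mid \neg p \mid x \mid \phi\land\phi\mid\phi\lor\phi\mid\Diamond\phi\mid\Box\phi\mid\mu x.\phi\mid\nu x.\phi$, where $p$ ranges over proposition letters and $x$ over an infinite supply of variables (which occur only positively). The formulas $\top,\bot,p,\neg p,x$ are atomic. $\mathrm{FV}(\phi)$ and $\mathrm{BV}(\phi)$ are the sets of free and bound variables of $\phi$; $\phi$ is tidy if $\mathrm{FV}(\phi)\cap\mathrm{BV}(\phi)=\varnothing$. A fixpoint formula is one of the form $\eta x.\chi$ with $\eta\in\{\mu,\nu\}$. $\chi[\xi/x]$ is the result of replacing every free occurrence of $x$ in $\chi$ by $\xi$; $\xi$ is free for $x$ in $\chi$ if no free variable of $\xi$ becomes bound in $\chi[\xi/x]$. Traces. The trace relation $\rightarrow_C$: $\phi_0\odot\phi_1\rightarrow_C\phi_i$ for $\odot\in\{\land,\lor\}$, $i\in\{0,1\}$; $\heartsuit\phi\rightarrow_C\phi$ for $\heartsuit\in\{\Diamond,\Box\}$; $\eta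 x.\phi\rightarrow_C\phi[\eta x.\phi/x]$; atomic formulas have no successors. A trace is a sequence of formulas with consecutive members related by $\rightarrow_C$. Free subformulas. $\phi\trianglelefteq_f\psi$ iff $\psi=\chi[\phi/y]$ for some formula $\chi$ and variable $y$ with $y\in\mathrm{FV}(\chi)$ and $\phi$ free for $y$ in $\chi$. For a formula $\psi$, $\rho\twoheadrightarrow_C^{\psi}\sigma$ iff there is a trace $\rho=\chi_0\rightarrow_C\cdots\rightarrow_C\chi_m=\sigma$ ($m\ge0$) with $\psi\trianglelefteq_f\chi_i$ for all $i\le m$. *)

theory Defs
  imports Main
begin

text \<open>Modal mu-calculus formulas in negation normal form. Proposition letters range
over an arbitrary type 'p; variables range over nat (an infinite supply).\<close>

type_synonym var = nat

datatype 'p fml =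
    Top | Bot | Prop 'p | NProp 'p | Var var
  | And "'p fml" "'p fml" | Or "'p fml" "'p fml"
  | Dia "'p fml" | Box "'p fml"
  | Mu var "'p fml" | Nu var "'p fml"

fun FV :: "'p fml \<Rightarrow> var set" where
  "FV Top = {}" | "FV Bot = {}" | "FV (Prop p) = {}" | "FV (NProp p) = {}"
| "FV (Var x) = {x}"
| "FV (And a b) = FV a \<union> FV b" | "FV (Or a b) = FV a \<union> FV b"
| "FV (Dia a) = FV a" | "FV (Box a) = FV a"
| "FV (Mu x a) = FV a - {x}" | "FV (Nu x a) = FV a - {x}"

fun BV :: "'p fml \<Rightarrow> var set" where
  "BV Top = {}" | "BV Bot = {}" | "BV (Prop p) = {}" | "BV (NProp p) = {}"
| "BV (Var x) = {}"
| "BV (And a b) = BV a \<union> BV b" | "BV (Or a b) = BV a \<union> BV b"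
| "BV (Dia a) = BV a" | "BV (Box a) = BV a"
| "BV (Mu x a) = insert x (BV a)" | "BV (Nu x a) = insert x (BV a)"

definition tidy :: "'p fml \<Rightarrow> bool" where
  "tidy \<phi> \<longleftrightarrow> FV \<phi> \<inter> BV \<phi> = {}"

fun is_fixpoint :: "'p fml \<Rightarrow> bool" where
  "is_fixpoint (Mu x a) = True" | "is_fixpoint (Nu x a) = True"
| "is_fixpoint _ = False"

text \<open>subst chi x xi = chi[xi/x]: replace every free occurrence of x in chi by xi
(no renaming of bound variables).\<close>
fun subst :: "'p fml \<Rightarrow> var \<Rightarrow> 'p fml \<Rightarrow> 'p fml" where
  "subst Top x \<xi> = Top" | "subst Bot x \<xi> = Bot"
| "subst (Prop p) x \<xi> = Prop p" | "subst (NProp p) x \<xi> = NProp p"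
| "subst (Var y) x \<xi> = (if y = x then \<xi> else Var y)"
| "subst (And a b) x \<xi> = And (subst a x \<xi>) (subst b x \<xi>)"
| "subst (Or a b) x \<xi> = Or (subst a x \<xi>) (subst b x \<xi>)"
| "subst (Dia a) x \<xi> = Dia (subst a x \<xi>)"
| "subst (Box a) x \<xi> = Box (subst a x \<xi>)"
| "subst (Mu y a) x \<xi> = (if y = x then Mu y a else Mu y (subst a x \<xi>))"
| "subst (Nu y a) x \<xi> = (if y = x then Nu y a else Nu y (subst a x \<xi>))"

text \<open>free_for xi x chi: no free variable of xi becomes bound in chi[xi/x], i.e. no free
occurrence of x in chi lies in the scope of a binder for a free variable of xi.\<close>
fun free_for :: "'p fml \<Rightarrow> var \<Rightarrow> 'p fml \<Rightarrow> bool" where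
  "free_for \<xi> x Top = True" | "free_for \<xi> x Bot = True"
| "free_for \<xi> x (Prop p) = True" | "free_for \<xi> x (NProp p) = True"
| "free_for \<xi> x (Var y) = True"
| "free_for \<xi> x (And a b) = (free_for \<xi> x a \<and> free_for \<xi> x b)"
| "free_for \<xi> x (Or a b) = (free_for \<xi> x a \<and> free_for \<xi> x b)"
| "free_for \<xi> x (Dia a) = free_for \<xi> x a"
| "free_for \<xi> x (Box a) = free_for \<xi> x a"
| "free_for \<xi> x (Mu y a) = (y = x \<or> ((x \<notin> FV a \<or> y \<notin> FV \<xi>) \<and> free_for \<xi> x a))"
| "free_for \<xi> x (Nu y a) = (y = x \<or> ((x \<notin> FV a \<or> y \<notin> FV \<xi>) \<and> free_for \<xi> x a))"

inductive trace_step :: "'p fml \<Rightarrow> 'p fml \<Rightarrow> bool" where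
  "trace_step (And a b) a" | "trace_step (And a b) b"
| "trace_step (Or a b) a" | "trace_step (Or a b) b"
| "trace_step (Dia a) a" | "trace_step (Box a) a"
| "trace_step (Mu x a) (subst a x (Mu x a))"
| "trace_step (Nu x a) (subst a x (Nu x a))"

definition free_sub :: "'p fml \<Rightarrow> 'p fml \<Rightarrow> bool" where
  "free_sub \<phi> \<psi> \<longleftrightarrow> (\<exists>\<chi> y. \<psi> = subst \<chi> y \<phi> \<and> y \<in> FV \<chi> \<and> free_for \<phi> y \<chi>)"

end

theory Submission
  imports Defs
begin


inductive fsub :: "'p fml \<Rightarrow> 'p fml \<Rightarrow> bool" where
  fs_refl: "fsub \<phi> \<phi>"
| fs_and1: "fsub \<phi> a \<Longrightarrow> fsub \<phi> (And a b)"
| fs_and2: "fsub \<phi> b \<Longrightarrow> fsub \<phi> (And a b)"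
| fs_or1: "fsub \<phi> a \<Longrightarrow> fsub \<phi> (Or a b)"
| fs_or2: "fsub \<phi> b \<Longrightarrow> fsub \<phi> (Or a b)"
| fs_dia: "fsub \<phi> a \<Longrightarrow> fsub \<phi> (Dia a)"
| fs_box: "fsub \<phi> a \<Longrightarrow> fsub \<phi> (Box a)"
| fs_mu: "fsub \<phi> a \<Longrightarrow> x \<notin> FV \<phi> \<Longrightarrow> fsub \<phi> (Mu x a)"
| fs_nu: "fsub \<phi> a \<Longrightarrow> x \<notin> FV \<phi> \<Longrightarrow> fsub \<phi> (Nu x a)"

lemma fsub_FV: "fsub a b \<Longrightarrow> FV a \<subseteq> FV b"
  by (induction rule: fsub.induct) auto

lemma fsub_trans: "fsub b c \<Longrightarrow> fsub a b \<Longrightarrow> fsub a c"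
proof (induction rule: fsub.induct)
  case (fs_mu \<phi> a x) thus ?case using fsub_FV by (metis fsub.fs_mu subsetD)
next
  case (fs_nu \<phi> a x) thus ?case using fsub_FV by (metis fsub.fs_nu subsetD)
qed (auto intro: fsub.intros)

lemma fsub_size: "fsub a b \<Longrightarrow> a = b \<or> size a < size b"
  by (induction rule: fsub.induct) auto

lemma fsub_antisym: "fsub a b \<Longrightarrow> fsub b a \<Longrightarrow> a = b"
  by (metis fsub_size less_asym)

lemma subst_nofree: "y \<notin> FV b \<Longrightarrow> subst b y \<phi> = b"
  by (induction b) auto

lemma free_for_nofree: "y \<notin> FV b \<Longrightarrow> free_for \<phi> y b"
  by (induction b) auto

lemma free_sub_fsub1: "y \<in> FV \<chi> \<Longrightarrow> free_for \<phi> y \<chi> \<Longrightarrow> fsub \<phi> (subst \<chi> y \<phi>)"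
  by (induction \<chi>) (auto intro: fsub.intros)

lemma fsub_free_sub1: "fsub \<phi> \<psi> \<Longrightarrow> y \<notin> FV \<psi> \<union> BV \<psi> \<Longrightarrow>
   \<exists>\<chi>. \<psi> = subst \<chi> y \<phi> \<and> y \<in> FV \<chi> \<and> free_for \<phi> y \<chi>"
proof (induction rule: fsub.induct)
  case (fs_refl \<phi>) thus ?case by (intro exI[of _ "Var y"]) auto
next
  case (fs_and1 \<phi> a b) then obtain \<chi> where "a = subst \<chi> y \<phi> \<and> y \<in> FV \<chi> \<and> free_for \<phi> y \<chi>" by auto
  thus ?case using fs_and1 by (intro exI[of _ "And \<chi> b"]) (auto simp: subst_nofree free_for_nofree)
next
  case (fs_and2 \<phi> b a) then obtain \<chi> where "b = subst \<chi> y \<phi> \<and> y \<in> FV \<chi> \<and> free_for \<phi> y \<chi>" by auto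
  thus ?case using fs_and2 by (intro exI[of _ "And a \<chi>"]) (auto simp: subst_nofree free_for_nofree)
next
  case (fs_or1 \<phi> a b) then obtain \<chi> where "a = subst \<chi> y \<phi> \<and> y \<in> FV \<chi> \<and> free_for \<phi> y \<chi>" by auto
  thus ?case using fs_or1 by (intro exI[of _ "Or \<chi> b"]) (auto simp: subst_nofree free_for_nofree)
next
  case (fs_or2 \<phi> b a) then obtain \<chi> where "b = subst \<chi> y \<phi> \<and> y \<in> FV \<chi> \<and> free_for \<phi> y \<chi>" by auto
  thus ?case using fs_or2 by (intro exI[of _ "Or a \<chi>"]) (auto simp: subst_nofree free_for_nofree)
next
  case (fs_dia \<phi> a) then obtain \<chi> where "a = subst \<chi> y \<phi> \<and> y \<in> FV \<chi> \<and> free_for \<phi> y \<chi>" by auto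
  thus ?case using fs_dia by (intro exI[of _ "Dia \<chi>"]) auto
next
  case (fs_box \<phi> a) then obtain \<chi> where "a = subst \<chi> y \<phi> \<and> y \<in> FV \<chi> \<and> free_for \<phi> y \<chi>" by auto
  thus ?case using fs_box by (intro exI[of _ "Box \<chi>"]) auto
next
  case (fs_mu \<phi> a x) then obtain \<chi> where "a = subst \<chi> y \<phi> \<and> y \<in> FV \<chi> \<and> free_for \<phi> y \<chi>" by auto
  thus ?case using fs_mu by (intro exI[of _ "Mu x \<chi>"]) auto
next
  case (fs_nu \<phi> a x) then obtain \<chi> where "a = subst \<chi> y \<phi> \<and> y \<in> FV \<chi> \<and> free_for \<phi> y \<chi>" by auto
  thus ?case using fs_nu by (intro exI[of _ "Nu x \<chi>"]) auto
qed

lemma finite_FV: "finite (FV \<phi>)" by (induction \<phi>) auto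
lemma finite_BV: "finite (BV \<phi>)" by (induction \<phi>) auto

lemma free_sub_iff: "free_sub \<phi> \<psi> \<longleftrightarrow> fsub \<phi> \<psi>"
proof
  assume "free_sub \<phi> \<psi>" thus "fsub \<phi> \<psi>" unfolding free_sub_def using free_sub_fsub1 by blast
next
  assume a: "fsub \<phi> \<psi>"
  have "finite (FV \<psi> \<union> BV \<psi>)" using finite_FV finite_BV by auto
  then obtain y :: nat where "y \<notin> FV \<psi> \<union> BV \<psi>"
    using ex_new_if_finite infinite_UNIV_nat by blast
  thus "free_sub \<phi> \<psi>" unfolding free_sub_def using fsub_free_sub1[OF a] by blast
qed

lemma fsub_subst_in: "x \<in> FV \<theta> \<Longrightarrow> FV \<rho> \<inter> BV \<theta> = {} \<Longrightarrow> fsub \<rho> (subst \<theta> x \<rho>)"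
  by (induction \<theta>) (auto intro: fsub.intros)

lemma U: "FV \<rho> \<inter> BV \<theta> = {} \<Longrightarrow> fsub \<tau> (subst \<theta> x \<rho>) \<Longrightarrow>
   fsub \<tau> \<rho> \<or> fsub \<rho> \<tau> \<or> (fsub \<tau> \<theta> \<and> x \<notin> FV \<tau>)"
proof (induction \<theta> arbitrary: \<tau>)
  case (Var y) thus ?case by (auto split: if_splits elim: fsub.cases intro: fsub.intros)
next
  case (And a b)
  from And.prems(2) show ?case
  proof (cases rule: fsub.cases)
    case fs_refl thus ?thesis using And.prems fsub_subst_in[of x "And a b" \<rho>]
      by (cases "x \<in> FV (And a b)") (auto simp: subst_nofree intro: fsub.intros)
  qed (use And in \<open>auto intro: fsub.intros\<close>)
next
  case (Or a b)
  from Or.prems(2) show ?case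
  proof (cases rule: fsub.cases)
    case fs_refl thus ?thesis using Or.prems fsub_subst_in[of x "Or a b" \<rho>]
      by (cases "x \<in> FV (Or a b)") (auto simp: subst_nofree intro: fsub.intros)
  qed (use Or in \<open>auto intro: fsub.intros\<close>)
next
  case (Dia a)
  from Dia.prems(2) show ?case
  proof (cases rule: fsub.cases)
    case fs_refl thus ?thesis using Dia.prems fsub_subst_in[of x "Dia a" \<rho>]
      by (cases "x \<in> FV (Dia a)") (auto simp: subst_nofree intro: fsub.intros)
  qed (use Dia in \<open>auto intro: fsub.intros\<close>)
next
  case (Box a)
  from Box.prems(2) show ?case
  proof (cases rule: fsub.cases)
    case fs_refl thus ?thesis using Box.prems fsub_subst_in[of x "Box a" \<rho>]
      by (cases "x \<in> FV (Box a)") (auto simp: subst_nofree intro: fsub.intros)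
  qed (use Box in \<open>auto intro: fsub.intros\<close>)
next
  case (Mu z a)
  show ?case
  proof (cases "z = x")
    case True
    thus ?thesis using Mu.prems fsub_FV by fastforce
  next
    case False
    from Mu.prems(2) False show ?thesis
    proof (cases rule: fsub.cases)
      case fs_refl thus ?thesis using Mu.prems False fsub_subst_in[of x "Mu z a" \<rho>]
        by (cases "x \<in> FV (Mu z a)") (auto simp: subst_nofree intro: fsub.intros)
    qed (use Mu False in \<open>auto intro: fsub.intros\<close>)
  qed
next
  case (Nu z a)
  show ?case
  proof (cases "z = x")
    case True
    thus ?thesis using Nu.prems fsub_FV by fastforce
  next
    case False
    from Nu.prems(2) False show ?thesis
    proof (cases rule: fsub.cases)
      case fs_refl thus ?thesis using Nu.prems False fsub_subst_in[of x "Nu z a" \<rho>]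
        by (cases "x \<in> FV (Nu z a)") (auto simp: subst_nofree intro: fsub.intros)
    qed (use Nu False in \<open>auto intro: fsub.intros\<close>)
  qed
qed (auto elim: fsub.cases intro: fsub.intros)

lemma S: assumes "tidy \<rho>" "trace_step \<rho> \<psi>" "fsub \<tau> \<psi>" shows "fsub \<tau> \<rho> \<or> fsub \<rho> \<tau>"
  using assms(2)
proof (cases rule: trace_step.cases)
  case (7 x a)
  have "FV (Mu x a) \<inter> BV a = {}" using 7 assms by (auto simp: tidy_def)
  thus ?thesis using U[of "Mu x a" a \<tau> x] 7 assms by (auto intro: fsub.intros)
next
  case (8 x a)
  have "FV (Nu x a) \<inter> BV a = {}" using 8 assms by (auto simp: tidy_def)
  thus ?thesis using U[of "Nu x a" a \<tau> x] 8 assms by (auto intro: fsub.intros)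
qed (use assms in \<open>auto intro: fsub.intros fsub_trans\<close>)

lemma step_size: "trace_step \<rho> \<psi> \<Longrightarrow> \<not> is_fixpoint \<rho> \<Longrightarrow> size \<psi> < size \<rho>"
  by (induction rule: trace_step.cases) auto


lemma main_inv:
  fixes \<rho> :: "nat \<Rightarrow> 'p fml" and n :: nat
  assumes "n \<ge> 1"
    and st: "\<And>i. 1 \<le> i \<Longrightarrow> i < n \<Longrightarrow> trace_step (\<rho> (Suc i)) (\<rho> i)"
    and td: "\<And>i. 1 \<le> i \<Longrightarrow> i \<le> n \<Longrightarrow> tidy (\<rho> i)"
  shows "m < n \<Longrightarrow> \<exists>\<sigma>. \<sigma> \<in> \<rho> ` {n-m..n} \<and> (\<forall>j\<in>{n-m..n}. fsub \<sigma> (\<rho> j))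
      \<and> (\<forall>\<tau>. fsub \<tau> (\<rho> (n-m)) \<longrightarrow> fsub \<sigma> \<tau> \<or> fsub \<tau> \<sigma>)"
proof (induction m)
  case 0 thus ?case by (intro exI[of _ "\<rho> n"]) (auto intro: fsub.intros)
next
  case (Suc m)
  define k where "k = n - Suc m"
  have k1: "1 \<le> k" "k < n" and kk: "Suc k = n - m" using Suc.prems unfolding k_def by auto
  from Suc obtain \<sigma> where s1: "\<sigma> \<in> \<rho> ` {Suc k..n}" and s2: "\<forall>j\<in>{Suc k..n}. fsub \<sigma> (\<rho> j)"
    and s3: "\<forall>\<tau>. fsub \<tau> (\<rho> (Suc k)) \<longrightarrow> fsub \<sigma> \<tau> \<or> fsub \<tau> \<sigma>" unfolding kk[symmetric] by auto
  have tr: "trace_step (\<rho> (Suc k)) (\<rho> k)" using st k1 by auto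
  have ti: "tidy (\<rho> (Suc k))" using td k1 by auto
  have SS: "\<And>\<tau>. fsub \<tau> (\<rho> k) \<Longrightarrow> fsub \<tau> (\<rho> (Suc k)) \<or> fsub (\<rho> (Suc k)) \<tau>"
    using S[OF ti tr] by blast
  have sk: "fsub \<sigma> (\<rho> (Suc k))" using s2 k1 by auto
  have ivl: "{k..n} = insert k {Suc k..n}" using k1 by auto
  have "\<exists>\<sigma>. \<sigma> \<in> \<rho> ` {k..n} \<and> (\<forall>j\<in>{k..n}. fsub \<sigma> (\<rho> j))
      \<and> (\<forall>\<tau>. fsub \<tau> (\<rho> k) \<longrightarrow> fsub \<sigma> \<tau> \<or> fsub \<tau> \<sigma>)"
  proof (cases "fsub \<sigma> (\<rho> k)")
    case True
    show ?thesis
    proof (intro exI[of _ \<sigma>] conjI allI impI)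
      show "\<sigma> \<in> \<rho> ` {k..n}" using s1 ivl by auto
      show "\<forall>j\<in>{k..n}. fsub \<sigma> (\<rho> j)" using s2 True ivl by auto
      fix \<tau> assume "fsub \<tau> (\<rho> k)"
      from SS[OF this] show "fsub \<sigma> \<tau> \<or> fsub \<tau> \<sigma>"
        using s3 sk fsub_trans by blast
    qed
  next
    case False
    have "fsub (\<rho> k) \<sigma>" using SS[OF fs_refl] s3 sk fsub_trans False by blast
    show ?thesis
    proof (intro exI[of _ "\<rho> k"] conjI allI impI)
      show "\<rho> k \<in> \<rho> ` {k..n}" using k1 by auto
      show "\<forall>j\<in>{k..n}. fsub (\<rho> k) (\<rho> j)"
        using s2 ivl \<open>fsub (\<rho> k) \<sigma>\<close> fsub_trans[of \<sigma> _ "\<rho> k"]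
        by (auto intro: fs_refl)
      fix \<tau> assume "fsub \<tau> (\<rho> k)" thus "fsub (\<rho> k) \<tau> \<or> fsub \<tau> (\<rho> k)" by blast
    qed
  qed
  thus ?case unfolding k_def by simp
qed

theorem mainTheorem2:
  fixes \<rho> :: "nat \<Rightarrow> 'p fml" and n :: nat
  assumes "n \<ge> 1"
    and "\<And>i. 1 \<le> i \<Longrightarrow> i < n \<Longrightarrow> trace_step (\<rho> (Suc i)) (\<rho> i)"
    and "\<And>i. 1 \<le> i \<Longrightarrow> i \<le> n \<Longrightarrow> tidy (\<rho> i)"
  shows "(\<exists>!\<sigma>. \<sigma> \<in> \<rho> ` {1..n} \<and> (\<forall>i\<in>{1..n}. free_sub \<sigma> (\<rho> i)))
       \<and> (\<forall>\<sigma>. \<sigma> \<in> \<rho> ` {1..n} \<and> (\<forall>i\<in>{1..n}. free_sub \<sigma> (\<rho> i))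
               \<longrightarrow> is_fixpoint (\<rho> 1) \<longrightarrow> is_fixpoint \<sigma>)"
proof (intro conjI allI impI)
  have "n - 1 < n" using assms(1) by auto
  from main_inv[of n \<rho> "n-1", OF assms this] obtain \<sigma> where
    "\<sigma> \<in> \<rho> ` {1..n}" "\<forall>j\<in>{1..n}. fsub \<sigma> (\<rho> j)"
    using assms(1) by (auto simp: Suc_leI)
  hence ex: "\<sigma> \<in> \<rho> ` {1..n} \<and> (\<forall>i\<in>{1..n}. free_sub \<sigma> (\<rho> i))" by (simp add: free_sub_iff)
  show "\<exists>!\<sigma>. \<sigma> \<in> \<rho> ` {1..n} \<and> (\<forall>i\<in>{1..n}. free_sub \<sigma> (\<rho> i))"
  proof (rule ex1I[of _ \<sigma>])
    show "\<sigma> \<in> \<rho> ` {1..n} \<and> (\<forall>i\<in>{1..n}. free_sub \<sigma> (\<rho> i))" by (rule ex)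
    fix \<sigma>' assume h: "\<sigma>' \<in> \<rho> ` {1..n} \<and> (\<forall>i\<in>{1..n}. free_sub \<sigma>' (\<rho> i))"
    have "fsub \<sigma>' \<sigma>" using h ex by (auto simp: free_sub_iff)
    moreover have "fsub \<sigma> \<sigma>'" using h ex by (auto simp: free_sub_iff)
    ultimately show "\<sigma>' = \<sigma>" using fsub_antisym by blast
  qed
next
  fix \<sigma> assume h: "\<sigma> \<in> \<rho> ` {1..n} \<and> (\<forall>i\<in>{1..n}. free_sub \<sigma> (\<rho> i))"
    and fp: "is_fixpoint (\<rho> 1)"
  then obtain m where m: "m \<in> {1..n}" "\<sigma> = \<rho> m" by auto
  show "is_fixpoint \<sigma>"
  proof (cases "m = 1")
    case True thus ?thesis using fp m by simp
  next
    case False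
    then obtain k where k: "m = Suc k" "1 \<le> k" "k < n" using m by (cases m) auto
    have tr: "trace_step (\<rho> m) (\<rho> k)" using assms(2) k by auto
    have "fsub \<sigma> (\<rho> k)" using h k by (auto simp: free_sub_iff)
    hence "size (\<rho> m) \<le> size (\<rho> k)" using fsub_size m(2) by fastforce
    thus ?thesis using step_size[OF tr] m(2) by fastforce
  qed
qed

end
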